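(* Let $(x_n)$ be a nonincreasing interval-filling sequence of positive reals with cardinal function $f$, and let $k\ge1$ be an integer such that $\#\{n\in\mathbb{N}: r_n>x_n\}\le k$. Then $f(x)\le 2^{k+1}$ for every $x\in\mathcal{A}((x_n))$ (in particular $f$ takes only finite values).
   Context: For a summable sequence $\mathbf{x}=(x_n)$ of positive reals, $\mathcal{A}(\mathbf{x})=\{\sum_{n\in A}x_n: A\subseteq\mathbb{N}\}$ is its achievement set and its cardinal function $f$ assigns to $x\in\mathcal{A}(\mathbf{x})$ the cardinality (a positive integer, $\omega$, or $\mathfrak{c}$) of $\{(\varepsilon_n)\in\{0,1\}^{\mathbb{N}}:\sum\varepsilon_nx_n=x\}$. The sequence is interval-filling if $\mathcal{A}(\mathbf{x})$ is an interval (equivalently $x_n\le r_n$ for all $n$). The tail sums are $r_n=\sum_{k=n+1}^\infty x_k$. *)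

theory Defs
  imports "HOL-Analysis.Analysis"
begin

text \<open>Sequences are indexed by nat (starting at 0). A 0-1 sequence
  (eps_n) is identified with the set A = {n. eps_n = 1}.\<close>

definition subsum :: "(nat \<Rightarrow> real) \<Rightarrow> nat set \<Rightarrow> real" where
  "subsum x A = (\<Sum>n. if n \<in> A then x n else 0)"

definition achievement_set :: "(nat \<Rightarrow> real) \<Rightarrow> real set" where
  "achievement_set x = {subsum x A | A. A \<subseteq> (UNIV :: nat set)}"

definition tail :: "(nat \<Rightarrow> real) \<Rightarrow> nat \<Rightarrow> real" where
  "tail x n = (\<Sum>k. x (k + Suc n))"

definition interval_filling :: "(nat \<Rightarrow> real) \<Rightarrow> bool" where
  "interval_filling x \<longleftrightarrow> (\<forall>n. x n \<le> tail x n)"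

text \<open>The set of representations of y; the cardinal function f(y) is its cardinality.\<close>
definition representations :: "(nat \<Rightarrow> real) \<Rightarrow> real \<Rightarrow> nat set set" where
  "representations x y = {A. subsum x A = y}"

end

theory Submission
  imports Defs
begin

lemma summ_ind:
  assumes pos: "\<And>n. x n > 0" and summ: "summable x"
  shows "summable (\<lambda>n. if n \<in> A then x n else (0::real))"
  by (rule summable_comparison_test'[OF summ, of 0]) (simp add: less_imp_le pos)

lemma core:
  fixes x :: "nat \<Rightarrow> real"
  assumes pos: "\<And>n. x n > 0" and summ: "summable x"
    and eq: "subsum x A = subsum x B" and mA: "m \<in> A" and mB: "m \<notin> B"
    and agree: "\<forall>n<m. n \<in> A \<longleftrightarrow> n \<in> B" and tl: "tail x m \<le> x m"
  shows "\<forall>n>m. n \<notin> A \<and> n \<in> B"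
proof -
  define fA where "fA = (\<lambda>n. if n \<in> A then x n else (0::real))"
  define fB where "fB = (\<lambda>n. if n \<in> B then x n else (0::real))"
  have sA: "summable fA" unfolding fA_def by (rule summ_ind[OF pos summ])
  have sB: "summable fB" unfolding fB_def by (rule summ_ind[OF pos summ])
  have sA': "summable (\<lambda>j. fA (j + Suc m))" using sA by (rule summable_ignore_initial_segment)
  have sB': "summable (\<lambda>j. fB (j + Suc m))" using sB by (rule summable_ignore_initial_segment)
  have sx': "summable (\<lambda>j. x (j + Suc m))" using summ by (rule summable_ignore_initial_segment)
  define tA where "tA = (\<Sum>j. fA (j + Suc m))"
  define tB where "tB = (\<Sum>j. fB (j + Suc m))"
  have splA: "suminf fA = tA + (\<Sum>i<Suc m. fA i)"
    unfolding tA_def by (rule suminf_split_initial_segment[OF sA])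
  have splB: "suminf fB = tB + (\<Sum>i<Suc m. fB i)"
    unfolding tB_def by (rule suminf_split_initial_segment[OF sB])
  have same: "(\<Sum>i<m. fA i) = (\<Sum>i<m. fB i)"
    by (rule sum.cong) (auto simp: fA_def fB_def agree)
  have "suminf fA = suminf fB" using eq unfolding subsum_def fA_def fB_def .
  hence teq: "tA + x m = tB" using splA splB same mA mB by (simp add: fA_def fB_def)
  have tBle: "tB \<le> tail x m" unfolding tB_def tail_def
    by (rule suminf_le[OF _ sB' sx']) (simp add: fB_def less_imp_le pos)
  have tAge: "tA \<ge> 0" unfolding tA_def
    by (rule suminf_nonneg[OF sA']) (simp add: fA_def less_imp_le pos)
  have tA0: "tA = 0" using teq tBle tAge tl by linarith
  have tBt: "tB = tail x m" using teq tBle tAge tl by linarith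
  have zA: "\<forall>j. fA (j + Suc m) = 0"
    using tA0 suminf_eq_zero_iff[OF sA'] by (simp add: tA_def fA_def less_imp_le pos)
  have sg: "summable (\<lambda>j. x (j + Suc m) - fB (j + Suc m))" using sx' sB' by (rule summable_diff)
  have "(\<Sum>j. x (j + Suc m) - fB (j + Suc m)) = tail x m - tB"
    unfolding tail_def tB_def by (rule suminf_diff[OF sx' sB', symmetric])
  hence "(\<Sum>j. x (j + Suc m) - fB (j + Suc m)) = 0" using tBt by simp
  hence zB: "\<forall>j. x (j + Suc m) - fB (j + Suc m) = 0"
    using suminf_eq_zero_iff[OF sg] by (simp add: fB_def less_imp_le pos)
  show ?thesis
  proof (intro allI impI)
    fix n assume "n > m"
    define j where "j = n - Suc m"
    have nj: "n = j + Suc m" using \<open>n > m\<close> unfolding j_def by simp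
    have "fA n = 0" using zA nj by simp
    hence "n \<notin> A" using pos[of n] by (auto simp: fA_def split: if_splits)
    moreover have "fB n = x n" using zB nj by simp
    hence "n \<in> B" using pos[of n] by (auto simp: fB_def split: if_splits)
    ultimately show "n \<notin> A \<and> n \<in> B" by simp
  qed
qed

lemma pairL:
  fixes x :: "nat \<Rightarrow> real"
  assumes pos: "\<And>n. x n > 0" and summ: "summable x"
    and eq: "subsum x A = subsum x B" and ne: "A \<noteq> B"
    and sameS: "A \<inter> {n. tail x n > x n} = B \<inter> {n. tail x n > x n}"
  shows "\<exists>m. ((\<forall>n>m. n \<notin> A) \<and> (\<forall>n>m. n \<in> B)) \<or> ((\<forall>n>m. n \<notin> B) \<and> (\<forall>n>m. n \<in> A))"
proof -
  define D where "D = (A - B) \<union> (B - A)"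
  have "D \<noteq> {}" using ne unfolding D_def by auto
  then obtain d where "d \<in> D" by auto
  define m where "m = (LEAST n. n \<in> D)"
  have mD: "m \<in> D" unfolding m_def using \<open>d \<in> D\<close> by (rule LeastI)
  have nD: "n \<notin> D" if "n < m" for n
    using not_less_Least[where P="\<lambda>n. n \<in> D"] that unfolding m_def by blast
  have below: "\<forall>n<m. n \<in> A \<longleftrightarrow> n \<in> B"
  proof (intro allI impI)
    fix n assume "n < m" hence "n \<notin> D" by (rule nD)
    thus "n \<in> A \<longleftrightarrow> n \<in> B" unfolding D_def by blast
  qed
  have tl: "tail x m \<le> x m"
  proof (rule ccontr)
    assume "\<not> tail x m \<le> x m"
    hence "m \<in> {n. tail x n > x n}" by simp
    hence "m \<in> A \<longleftrightarrow> m \<in> B" using sameS by blast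
    thus False using mD unfolding D_def by blast
  qed
  show ?thesis
  proof (cases "m \<in> A")
    case True
    hence "m \<notin> B" using mD unfolding D_def by blast
    from core[OF pos summ eq True this below tl] show ?thesis by blast
  next
    case False
    hence "m \<in> B" using mD unfolding D_def by blast
    moreover have "\<forall>n<m. n \<in> B \<longleftrightarrow> n \<in> A" using below by blast
    ultimately have "\<forall>n>m. n \<notin> B \<and> n \<in> A" by (rule core[OF pos summ eq[symmetric] _ False _ tl])
    thus ?thesis by blast
  qed
qed

lemma excl: fixes m m' :: nat shows "\<not> ((\<forall>n>m. n \<notin> A) \<and> (\<forall>n>m'. n \<in> A))"
proof
  assume h: "(\<forall>n>m. n \<notin> A) \<and> (\<forall>n>m'. n \<in> A)"
  have "Suc (max m m') > m" "Suc (max m m') > m'" by auto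
  thus False using h by blast
qed

lemma two_le:
  assumes "\<forall>a\<in>F. \<forall>b\<in>F. \<forall>c\<in>F. a = b \<or> a = c \<or> b = c"
  shows "finite F \<and> card F \<le> 2"
proof (cases "F = {}")
  case True thus ?thesis by simp
next
  case False
  then obtain a where a: "a \<in> F" by auto
  show ?thesis
  proof (cases "F \<subseteq> {a}")
    case True
    have "card F \<le> card {a}" using True by (rule card_mono[rotated]) simp
    thus ?thesis using True finite_subset by fastforce
  next
    case False
    then obtain b where b: "b \<in> F" "b \<noteq> a" by auto
    have sub: "F \<subseteq> {a, b}" using assms a b by blast
    have "card {a,b} \<le> 2" by (simp add: card_insert_le_m1)
    thus ?thesis using sub card_mono[OF _ sub] finite_subset[OF sub] by auto
  qed
qed

lemma tri:
  assumes "\<not> (bA \<and> cA)" "\<not> (bB \<and> cB)" "\<not> (bC \<and> cC)"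
    "A = B \<or> (bA \<and> cB) \<or> (bB \<and> cA)"
    "A = C \<or> (bA \<and> cC) \<or> (bC \<and> cA)"
    "B = C \<or> (bB \<and> cC) \<or> (bC \<and> cB)"
  shows "A = B \<or> A = C \<or> B = C"
  using assms by blast

theorem theorem4p11:
  fixes x :: "nat \<Rightarrow> real" and k :: nat
  assumes pos: "\<And>n. x n > 0"
    and summ: "summable x"
    and noninc: "decseq x"
    and fill: "interval_filling x"
    and k1: "k \<ge> 1"
    and fin: "finite {n. tail x n > x n}"
    and cardk: "card {n. tail x n > x n} \<le> k"
  shows "\<forall>y \<in> achievement_set x. finite (representations x y) \<and>
            card (representations x y) \<le> 2 ^ (k + 1)"
proof
  fix y assume "y \<in> achievement_set x"
  define S where "S = {n. tail x n > x n}"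
  define R where "R = representations x y"
  define F where "F = (\<lambda>T. {A \<in> R. A \<inter> S = T})"
  have fib: "finite (F T) \<and> card (F T) \<le> 2" for T
  proof (rule two_le, intro ballI)
    fix A B C assume ABC: "A \<in> F T" "B \<in> F T" "C \<in> F T"
    let ?b = "\<lambda>X. \<exists>m::nat. \<forall>n>m. n \<notin> X"
    let ?c = "\<lambda>X. \<exists>m::nat. \<forall>n>m. n \<in> X"
    have ex: "\<not> (?b X \<and> ?c X)" for X
    proof
      assume "?b X \<and> ?c X"
      then obtain m m' where "\<forall>n>m. n \<notin> X" "\<forall>n>m'. n \<in> X" by blast
      thus False using excl[of m X m'] by blast
    qed
    have pr: "X = Y \<or> (?b X \<and> ?c Y) \<or> (?b Y \<and> ?c X)" if "X \<in> F T" "Y \<in> F T" for X Y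
    proof (cases "X = Y")
      case False
      have "subsum x X = subsum x Y" "X \<inter> S = Y \<inter> S" using that
        by (auto simp: F_def R_def representations_def)
      from pairL[OF pos summ this(1) False this(2)[unfolded S_def]] show ?thesis by blast
    qed simp
    show "A = B \<or> A = C \<or> B = C"
    proof -
      show ?thesis
        by (rule tri[OF ex[of A] ex[of B] ex[of C] pr[OF ABC(1) ABC(2)] pr[OF ABC(1) ABC(3)] pr[OF ABC(2) ABC(3)]])
    qed
  qed
  have RU: "R = (\<Union>T\<in>Pow S. F T)" unfolding F_def by auto
  have finS: "finite S" using fin S_def by simp
  have "finite R" unfolding RU using finS fib by auto
  moreover have "card R \<le> 2 ^ (k + 1)"
  proof -
    have "card R \<le> (\<Sum>T\<in>Pow S. card (F T))" unfolding RU
      by (rule card_UN_le) (simp add: finS)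
    also have "\<dots> \<le> (\<Sum>T\<in>Pow S. 2)" by (rule sum_mono) (use fib in auto)
    also have "\<dots> = 2 * 2 ^ card S" by (simp add: card_Pow finS)
    also have "\<dots> = 2 ^ (card S + 1)" by simp
    also have "\<dots> \<le> 2 ^ (k + 1)" by (rule power_increasing) (use cardk S_def in auto)
    finally show ?thesis .
  qed
  ultimately show "finite (representations x y) \<and> card (representations x y) \<le> 2 ^ (k + 1)"
    unfolding R_def by simp
qed

end
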